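(* Let $p$ be a prime and let $f:\mathbb{Z}_p\times\mathbb{Z}_p\to\mathbb{Z}_p$ be additively inseparable. Write $f(x,y)=\sum_{i,j=0}^{p-1}\lambda_{i,j}x^iy^j$ with $\lambda_{i,j}\in\mathbb{Z}_p$. Then $\Delta(f)\ge 2$. Moreover, $2^{\Delta(f)-2}$ copies of $P^f$, together with local processing and without communication, suffice to simulate one copy of $PR_p$ exactly.
   Context: Let $p$ be a prime. All arithmetic on elements of $\mathbb{Z}_p$ is modulo $p$. A box is a conditional probability distribution $P(a,b\mid x,y)$ with $a,b,x,y\in\mathbb{Z}_p$. It is shared by Alice, who supplies $x$ and receives $a$, and Bob, who supplies $y$ and receives $b$. Different copies act independently. $PR_p(a,b\mid x,y)=1/p$ if $a-b=xy$, and $0$ otherwise. For $f:\mathbb{Z}_p\times\mathbb{Z}_p\to\mathbb{Z}_p$, the functional box is $P^f(a,b\mid x,y)=1/p$ if $a-b=f(x,y)$, and $0$ otherwise. A function $f$ is additively separable if $f(x,y)=g(x)+h(y)$ for some $g,h:\mathbb{Z}_p\to\mathbb{Z}_p$. Otherwise it is additively inseparable. Every $f$ has a unique representation $f(x,y)=\sum_{i,j=0}^{p-1}\lambda_{i,j}x^iy^j$. Define $$\Delta(f)=\max_{1\le i,j\le p-1}\mathbb{I}_{\lambda_{i,j}\neq0}\,(i+j),$$ the maximal total degree of a monomial with nonzero coefficient that is divisible by $xy$. It is $0$ if there is no such monomial. *)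

theory Defs
  imports Complex_Main "HOL-Library.FuncSet" "Berlekamp_Zassenhaus.Finite_Field"
begin

text \<open>Z_p is modelled by the type 'p mod_ring with 'p :: prime_card, i.e. CARD('p) = p is prime.\<close>

type_synonym 'p box = "'p mod_ring \<Rightarrow> 'p mod_ring \<Rightarrow> 'p mod_ring \<Rightarrow> 'p mod_ring \<Rightarrow> real"
  (* P a b x y  =  P(a,b | x,y) *)

definition PR_box :: "('p::prime_card) box" where
  "PR_box a b x y = (if a - b = x * y then 1 / real CARD('p) else 0)"

definition functional_box ::
  "('p::prime_card mod_ring \<Rightarrow> 'p mod_ring \<Rightarrow> 'p mod_ring) \<Rightarrow> 'p box" where
  "functional_box f a b x y = (if a - b = f x y then 1 / real CARD('p) else 0)"

definition additively_separable ::
  "('p::prime_card mod_ring \<Rightarrow> 'p mod_ring \<Rightarrow> 'p mod_ring) \<Rightarrow> bool" where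
  "additively_separable f \<longleftrightarrow> (\<exists>g h. \<forall>x y. f x y = g x + h y)"

definition is_poly_rep ::
  "('p::prime_card mod_ring \<Rightarrow> 'p mod_ring \<Rightarrow> 'p mod_ring) \<Rightarrow> (nat \<Rightarrow> nat \<Rightarrow> 'p mod_ring) \<Rightarrow> bool" where
  "is_poly_rep f lam \<longleftrightarrow>
     (\<forall>i j. (CARD('p) \<le> i \<or> CARD('p) \<le> j) \<longrightarrow> lam i j = 0) \<and>
     (\<forall>x y. f x y = (\<Sum>i<CARD('p). \<Sum>j<CARD('p). lam i j * x ^ i * y ^ j))"

definition poly_coeffs ::
  "('p::prime_card mod_ring \<Rightarrow> 'p mod_ring \<Rightarrow> 'p mod_ring) \<Rightarrow> nat \<Rightarrow> nat \<Rightarrow> 'p mod_ring" where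
  "poly_coeffs f = (THE lam. is_poly_rep f lam)"

definition Delta :: "('p::prime_card mod_ring \<Rightarrow> 'p mod_ring \<Rightarrow> 'p mod_ring) \<Rightarrow> nat" where
  "Delta f = Max ({i + j | i j. 1 \<le> i \<and> i \<le> CARD('p) - 1 \<and> 1 \<le> j \<and> j \<le> CARD('p) - 1
                              \<and> poly_coeffs f i j \<noteq> 0} \<union> {0})"

text \<open>Simulation of box Q by k independent copies of box P with local processing and no
  communication: Alice maps her input x to inputs Ain x i for copies i < k and outputs
  Aout x (a_0,...,a_{k-1}); Bob likewise.\<close>
definition simulates_with :: "nat \<Rightarrow> ('p::prime_card) box \<Rightarrow> 'p box \<Rightarrow> bool" where
  "simulates_with k P Q \<longleftrightarrow>
    (\<exists>(Ain :: 'p mod_ring \<Rightarrow> nat \<Rightarrow> 'p mod_ring) (Bin :: 'p mod_ring \<Rightarrow> nat \<Rightarrow> 'p mod_ring)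
      (Aout :: 'p mod_ring \<Rightarrow> (nat \<Rightarrow> 'p mod_ring) \<Rightarrow> 'p mod_ring)
      (Bout :: 'p mod_ring \<Rightarrow> (nat \<Rightarrow> 'p mod_ring) \<Rightarrow> 'p mod_ring).
      \<forall>a b x y. Q a b x y =
        (\<Sum>av \<in> PiE {..<k} (\<lambda>_. UNIV). \<Sum>bv \<in> PiE {..<k} (\<lambda>_. UNIV).
           (\<Prod>i<k. P (av i) (bv i) (Ain x i) (Bin y i)) *
           (if Aout x av = a \<and> Bout y bv = b then 1 else 0)))"

end

theory Submission
  imports Defs "HOL-Computational_Algebra.Polynomial" "Berlekamp_Zassenhaus.Berlekamp_Type_Based"
begin

lemma card_ge2: "CARD('p::prime_card) \<ge> 2"
  using prime_card[where 'a='p] prime_ge_2_nat by blast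

lemma poly1_zero:
  fixes c :: "nat \<Rightarrow> 'p::prime_card mod_ring"
  assumes h: "\<forall>x::'p mod_ring. (\<Sum>i<CARD('p). c i * x^i) = 0" and i: "i < CARD('p)"
  shows "c i = 0"
proof -
  define P where "P = (\<Sum>i<CARD('p). monom (c i) i)"
  have ev: "poly P x = (\<Sum>i<CARD('p). c i * x^i)" for x by (simp add: P_def poly_sum poly_monom)
  have "P = 0"
  proof (rule ccontr)
    assume "P \<noteq> 0"
    then have "card {x. poly P x = 0} \<le> degree P" by (rule card_poly_roots_bound)
    moreover have "{x. poly P x = 0} = UNIV" using h ev by auto
    moreover have "degree P \<le> CARD('p) - 1" unfolding P_def
      by (rule degree_sum_le) (auto intro: order.trans[OF degree_monom_le])
    moreover have "CARD('p) \<ge> 2" by (rule card_ge2)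
    ultimately show False by simp
  qed
  then have "coeff P i = 0" by simp
  moreover have "coeff P i = c i" unfolding P_def coeff_sum coeff_monom using i
    by (simp add: sum.delta)
  ultimately show ?thesis by simp
qed

abbreviation NN where "NN \<equiv> CARD('p::prime_card)"

lemma poly2_zero:
  fixes c :: "nat \<Rightarrow> nat \<Rightarrow> 'p::prime_card mod_ring"
  assumes h: "\<forall>x y::'p mod_ring. (\<Sum>i<CARD('p). \<Sum>j<CARD('p). c i j * x^i * y^j) = 0"
    and i: "i < CARD('p)" and j: "j < CARD('p)"
  shows "c i j = 0"
proof -
  have "\<forall>x::'p mod_ring. (\<Sum>i<CARD('p). (\<Sum>j<CARD('p). c i j * y^j) * x^i) = 0" for y
  proof
    fix x :: "'p mod_ring"
    have "(\<Sum>i<CARD('p). (\<Sum>j<CARD('p). c i j * y^j) * x^i)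
        = (\<Sum>i<CARD('p). \<Sum>j<CARD('p). c i j * x^i * y^j)"
      unfolding sum_distrib_right by (intro sum.cong refl) (simp add: ac_simps)
    then show "(\<Sum>i<CARD('p). (\<Sum>j<CARD('p). c i j * y^j) * x^i) = 0" using h by simp
  qed
  then have "\<forall>y::'p mod_ring. (\<Sum>j<CARD('p). c i j * y^j) = 0"
    using poly1_zero[of "\<lambda>i. \<Sum>j<CARD('p). c i j * y^j" for y] i by blast
  then show ?thesis using poly1_zero[of "c i" j] j by blast
qed

lemma rep_unique:
  assumes "is_poly_rep f l1" "is_poly_rep f l2" shows "l1 = l2"
proof (intro ext)
  fix i j
  show "l1 i j = l2 i j"
  proof (cases "i < CARD('a) \<and> j < CARD('a)")
    case True
    have "\<forall>x y::'a mod_ring. (\<Sum>i<CARD('a). \<Sum>j<CARD('a). (l1 i j - l2 i j) * x^i * y^j) = 0"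
    proof (intro allI)
      fix x y :: "'a mod_ring"
      have "(\<Sum>i<CARD('a). \<Sum>j<CARD('a). (l1 i j - l2 i j) * x^i * y^j)
         = (\<Sum>i<CARD('a). \<Sum>j<CARD('a). l1 i j * x^i * y^j) - (\<Sum>i<CARD('a). \<Sum>j<CARD('a). l2 i j * x^i * y^j)"
        by (simp add: sum_subtractf left_diff_distrib)
      also have "\<dots> = f x y - f x y" using assms unfolding is_poly_rep_def by (metis (no_types))
      also have "\<dots> = 0" by simp
      finally show "(\<Sum>i<CARD('a). \<Sum>j<CARD('a). (l1 i j - l2 i j) * x^i * y^j) = 0" .
    qed
    then have "l1 i j - l2 i j = 0" using poly2_zero[of "\<lambda>i j. l1 i j - l2 i j" i j] True by blast
    then show ?thesis by simp
  next
    case False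
    then show ?thesis using assms unfolding is_poly_rep_def by (metis not_le)
  qed
qed

lemma fermat1:
  fixes x :: "'p::prime_card mod_ring"
  assumes "x \<noteq> 0" shows "x ^ (CARD('p) - 1) = 1"
proof -
  have c: "CARD('p) = Suc (CARD('p) - 1)" using card_ge2[where 'p='p] by simp
  have "x * x ^ (CARD('p) - 1) = x * 1"
    using fermat_theorem_mod_ring[of x] c by (metis mult_1_right power_Suc)
  then show ?thesis using assms by simp
qed

lemma delta_pow:
  fixes t :: "'p::prime_card mod_ring"
  shows "1 - t ^ (CARD('p) - 1) = (if t = 0 then 1 else 0)"
  using fermat1[of t] card_ge2[where 'p='p] by auto

lemma poly1_exists:
  fixes g :: "'p::prime_card mod_ring \<Rightarrow> 'p mod_ring"
  shows "\<exists>c. \<forall>x. g x = (\<Sum>k<CARD('p). c k * x^k)"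
proof -
  define e :: "'p mod_ring \<Rightarrow> nat \<Rightarrow> 'p mod_ring" where
    "e a k = (if k = 0 then 1 else 0) - of_nat (CARD('p) - 1 choose k) * (-a) ^ (CARD('p) - 1 - k)" for a k
  have c: "{..CARD('p) - 1} = {..<CARD('p)}" using card_ge2[where 'p='p] by auto
  have de: "1 - (x - a) ^ (CARD('p) - 1) = (\<Sum>k<CARD('p). e a k * x^k)" for x a
  proof -
    have "(x - a) ^ (CARD('p) - 1) = (x + (-a)) ^ (CARD('p) - 1)" by simp
    also have "\<dots> = (\<Sum>k\<le>CARD('p) - 1. of_nat (CARD('p) - 1 choose k) * x^k * (-a) ^ (CARD('p) - 1 - k))"
      by (rule binomial_ring)
    also have "\<dots> = (\<Sum>k<CARD('p). of_nat (CARD('p) - 1 choose k) * (-a) ^ (CARD('p) - 1 - k) * x^k)"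
      unfolding c by (simp add: ac_simps)
    finally have 1: "(x - a) ^ (CARD('p) - 1) = \<dots>" .
    have 2: "(\<Sum>k<CARD('p). (if k = 0 then 1 else 0) * x^k) = (1::'p mod_ring)"
    proof -
      have "(\<Sum>k<CARD('p). (if k = 0 then 1 else 0) * x^k) = (\<Sum>k<CARD('p). if k = 0 then (1::'p mod_ring) else 0)"
        by (rule sum.cong) auto
      then show ?thesis using card_ge2[where 'p='p] by simp
    qed
    show ?thesis unfolding 1 e_def left_diff_distrib sum_subtractf 2 ..
  qed
  have "g x = (\<Sum>k<CARD('p). (\<Sum>a\<in>UNIV. g a * e a k) * x^k)" for x
  proof -
    have "g x = (\<Sum>a\<in>UNIV. g a * (1 - (x - a) ^ (CARD('p) - 1)))"
      unfolding delta_pow by (simp add: if_distrib sum.delta cong: if_cong)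
    also have "\<dots> = (\<Sum>a\<in>UNIV. \<Sum>k<CARD('p). g a * e a k * x^k)"
      unfolding de by (simp add: sum_distrib_left ac_simps)
    also have "\<dots> = (\<Sum>k<CARD('p). (\<Sum>a\<in>UNIV. g a * e a k) * x^k)"
      by (subst sum.swap) (simp add: sum_distrib_right)
    finally show ?thesis .
  qed
  then show ?thesis by (intro exI[of _ "\<lambda>k. \<Sum>a\<in>UNIV. g a * e a k"]) blast
qed

lemma poly2_exists:
  fixes f :: "'p::prime_card mod_ring \<Rightarrow> 'p mod_ring \<Rightarrow> 'p mod_ring"
  shows "\<exists>l. is_poly_rep f l"
proof -
  have "\<forall>x. \<exists>c. \<forall>y. f x y = (\<Sum>j<CARD('p). c j * y^j)" using poly1_exists by blast
  then have "\<exists>d. \<forall>x y. f x y = (\<Sum>j<CARD('p). d x j * y^j)" by (rule choice)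
  then obtain d where d: "\<And>x y. f x y = (\<Sum>j<CARD('p). d x j * y^j)" by blast
  have "\<forall>j. \<exists>c. \<forall>x. d x j = (\<Sum>i<CARD('p). c i * x^i)" by (intro allI poly1_exists)
  then have "\<exists>e. \<forall>j x. d x j = (\<Sum>i<CARD('p). e j i * x^i)" by (rule choice)
  then obtain e where e: "\<And>x j. d x j = (\<Sum>i<CARD('p). e j i * x^i)" by blast
  define l where "l i j = (if i < CARD('p) \<and> j < CARD('p) then e j i else 0)" for i j
  have "f x y = (\<Sum>i<CARD('p). \<Sum>j<CARD('p). l i j * x ^ i * y ^ j)" for x y
  proof -
    have "f x y = (\<Sum>j<CARD('p). \<Sum>i<CARD('p). e j i * x^i * y^j)"
      unfolding d e by (simp add: sum_distrib_right)
    also have "\<dots> = (\<Sum>i<CARD('p). \<Sum>j<CARD('p). e j i * x^i * y^j)" by (rule sum.swap)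
    also have "\<dots> = (\<Sum>i<CARD('p). \<Sum>j<CARD('p). l i j * x ^ i * y ^ j)"
      by (intro sum.cong refl) (simp add: l_def)
    finally show ?thesis .
  qed
  moreover have "\<forall>i j. (CARD('p) \<le> i \<or> CARD('p) \<le> j) \<longrightarrow> l i j = 0" by (auto simp: l_def)
  ultimately show ?thesis unfolding is_poly_rep_def by blast
qed

lemma poly_coeffs_rep: "is_poly_rep f (poly_coeffs f)"
proof -
  obtain l where l: "is_poly_rep f l" using poly2_exists by blast
  have "\<exists>!l. is_poly_rep f l"
  proof (rule ex1I[of _ l])
    show "is_poly_rep f l" by (rule l)
    show "\<And>l'. is_poly_rep f l' \<Longrightarrow> l' = l" using l rep_unique by blast
  qed
  then show ?thesis unfolding poly_coeffs_def by (rule theI')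
qed

definition rep :: "('p::prime_card mod_ring \<Rightarrow> 'p mod_ring \<Rightarrow> 'p mod_ring) \<Rightarrow> (nat \<Rightarrow> nat \<Rightarrow> 'p mod_ring) \<Rightarrow> bool" where
  "rep F \<mu> \<longleftrightarrow> (\<forall>x y. F x y = (\<Sum>i<CARD('p). \<Sum>j<CARD('p). \<mu> i j * x ^ i * y ^ j))"

lemma mixed11:
  fixes F :: "'p::prime_card mod_ring \<Rightarrow> 'p mod_ring \<Rightarrow> 'p mod_ring"
  assumes r: "rep F \<mu>"
    and z: "\<And>i j. 1 \<le> i \<Longrightarrow> 1 \<le> j \<Longrightarrow> i < CARD('p) \<Longrightarrow> j < CARD('p) \<Longrightarrow> (i, j) \<noteq> (1, 1) \<Longrightarrow> \<mu> i j = 0"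
  shows "F x y = \<mu> 1 1 * x * y + (\<Sum>i<CARD('p). \<mu> i 0 * x^i) + ((\<Sum>j<CARD('p). \<mu> 0 j * y^j) - \<mu> 0 0)"
proof -
  have N: "1 < CARD('p)" using card_ge2[where 'p='p] by simp
  have t: "\<mu> i j * x ^ i * y ^ j = (if j = 0 then \<mu> i 0 * x^i else 0) + (if i = 0 then \<mu> 0 j * y^j else 0)
     - (if i = 0 \<and> j = 0 then \<mu> 0 0 else 0) + (if i = 1 \<and> j = 1 then \<mu> 1 1 * x * y else 0)"
    if "i < CARD('p)" "j < CARD('p)" for i j
  proof (cases "i = 0 \<or> j = 0")
    case True
    then show ?thesis by (cases "i = 0"; cases "j = 0") simp_all
  next
    case False
    show ?thesis
    proof (cases "i = 1 \<and> j = 1")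
      case True
      then show ?thesis by simp
    next
      case F2: False
      have "\<mu> i j = 0" using z[of i j] that False F2 by simp
      then show ?thesis using False F2 by auto
    qed
  qed
  have "F x y = (\<Sum>i<CARD('p). \<Sum>j<CARD('p). (if j = 0 then \<mu> i 0 * x^i else 0) + (if i = 0 then \<mu> 0 j * y^j else 0)
     - (if i = 0 \<and> j = 0 then \<mu> 0 0 else 0) + (if i = 1 \<and> j = 1 then \<mu> 1 1 * x * y else 0))" (is "_ = ?R")
  proof -
    have "F x y = (\<Sum>i<CARD('p). \<Sum>j<CARD('p). \<mu> i j * x ^ i * y ^ j)" using r unfolding rep_def by blast
    also have "\<dots> = ?R" by (intro sum.cong refl) (rule t; simp)
    finally show ?thesis .
  qed
  also have "\<dots> = \<mu> 1 1 * x * y + (\<Sum>i<CARD('p). \<mu> i 0 * x^i) + ((\<Sum>j<CARD('p). \<mu> 0 j * y^j) - \<mu> 0 0)"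
  proof -
    have A: "(\<Sum>i<CARD('p). \<Sum>j<CARD('p). if j = 0 then \<mu> i 0 * x^i else 0) = (\<Sum>i<CARD('p). \<mu> i 0 * x^i)"
      using N by simp
    have B: "(\<Sum>i<CARD('p). \<Sum>j<CARD('p). if i = 0 then \<mu> 0 j * y^j else 0) = (\<Sum>j<CARD('p). \<mu> 0 j * y^j)"
    proof -
      have h: "(\<Sum>j<CARD('p). if i = 0 then \<mu> 0 j * y^j else 0) = (if i = 0 then (\<Sum>j<CARD('p). \<mu> 0 j * y^j) else 0)" for i
        by (cases "i = 0") simp_all
      have "(\<Sum>i<CARD('p). \<Sum>j<CARD('p). if i = 0 then \<mu> 0 j * y^j else 0) = (\<Sum>i<CARD('p). if i = 0 then (\<Sum>j<CARD('p). \<mu> 0 j * y^j) else 0)"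
        by (rule sum.cong[OF refl]) (rule h)
      then show ?thesis using N by simp
    qed
    have C: "(\<Sum>i<CARD('p). \<Sum>j<CARD('p). if i = 0 \<and> j = 0 then \<mu> 0 0 else 0) = \<mu> 0 0"
    proof -
      have h: "(\<Sum>j<CARD('p). if i = 0 \<and> j = 0 then \<mu> 0 0 else 0) = (if i = 0 then \<mu> 0 0 else 0)" for i
        using N by (cases "i = 0") simp_all
      have "(\<Sum>i<CARD('p). \<Sum>j<CARD('p). if i = 0 \<and> j = 0 then \<mu> 0 0 else 0) = (\<Sum>i<CARD('p). if i = 0 then \<mu> 0 0 else 0)"
        by (rule sum.cong[OF refl]) (rule h)
      then show ?thesis using N by simp
    qed
    have D: "(\<Sum>i<CARD('p). \<Sum>j<CARD('p). if i = 1 \<and> j = 1 then \<mu> 1 1 * x * y else 0) = \<mu> 1 1 * x * y"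
    proof -
      have h: "(\<Sum>j<CARD('p). if i = 1 \<and> j = 1 then \<mu> 1 1 * x * y else 0) = (if i = 1 then \<mu> 1 1 * x * y else 0)" for i
        using N by (cases "i = 1") simp_all
      have "(\<Sum>i<CARD('p). \<Sum>j<CARD('p). if i = 1 \<and> j = 1 then \<mu> 1 1 * x * y else 0) = (\<Sum>i<CARD('p). if i = 1 then \<mu> 1 1 * x * y else 0)"
        by (rule sum.cong[OF refl]) (rule h)
      then show ?thesis using N by simp
    qed
    have alg: "\<And>a b c d::'p mod_ring. a + b - c + d = d + a + (b - c)" by (simp add: algebra_simps)
    show ?thesis unfolding sum.distrib sum_subtractf A B C D by (rule alg)
  qed
  finally show ?thesis .
qed

lemma delta_witness:
  fixes f :: "'p::prime_card mod_ring \<Rightarrow> 'p mod_ring \<Rightarrow> 'p mod_ring"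
  assumes ns: "\<not> additively_separable f"
  shows "\<exists>i0 j0. Delta f = i0 + j0 \<and> 1 \<le> i0 \<and> 1 \<le> j0 \<and> i0 < CARD('p) \<and> j0 < CARD('p)
     \<and> poly_coeffs f i0 j0 \<noteq> 0 \<and> (\<forall>i j. 1 \<le> i \<longrightarrow> 1 \<le> j \<longrightarrow> i < CARD('p) \<longrightarrow> j < CARD('p)
          \<longrightarrow> poly_coeffs f i j \<noteq> 0 \<longrightarrow> i + j \<le> Delta f)"
proof -
  define l where "l = poly_coeffs f"
  define S where "S = {i + j | i j. 1 \<le> i \<and> i \<le> CARD('p) - 1 \<and> 1 \<le> j \<and> j \<le> CARD('p) - 1 \<and> l i j \<noteq> 0}"
  have D: "Delta f = Max (S \<union> {0})" unfolding Delta_def S_def l_def by simp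
  have fin: "finite S"
    by (rule finite_subset[of _ "{..2*CARD('p)}"]) (auto simp: S_def)
  have rl: "rep f l" using poly_coeffs_rep[of f] unfolding is_poly_rep_def rep_def l_def by blast
  have N: "1 < CARD('p)" using card_ge2[where 'p='p] by simp
  have ne: "S \<noteq> {}"
  proof
    assume "S = {}"
    then have z: "\<And>i j. 1 \<le> i \<Longrightarrow> 1 \<le> j \<Longrightarrow> i < CARD('p) \<Longrightarrow> j < CARD('p) \<Longrightarrow> l i j = 0"
      unfolding S_def by fastforce
    have e: "f x y = l 1 1 * x * y + (\<Sum>i<CARD('p). l i 0 * x^i) + ((\<Sum>j<CARD('p). l 0 j * y^j) - l 0 0)" for x y
      by (rule mixed11[OF rl], rule z) auto
    have "l 1 1 = 0" using z N by simp
    then have "\<forall>x y. f x y = (\<Sum>i<CARD('p). l i 0 * x^i) + ((\<Sum>j<CARD('p). l 0 j * y^j) - l 0 0)"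
      using e by simp
    then have "additively_separable f" unfolding additively_separable_def
      by (intro exI[of _ "\<lambda>x. \<Sum>i<CARD('p). l i 0 * x^i"] exI[of _ "\<lambda>y. (\<Sum>j<CARD('p). l 0 j * y^j) - l 0 0"]) simp
    then show False using ns by simp
  qed
  then obtain m where mS: "m \<in> S" by blast
  have m2: "m \<ge> 2" using mS unfolding S_def by auto
  have "Max (S \<union> {0}) \<ge> m" using fin mS by (intro Max_ge) auto
  moreover have "Max (S \<union> {0}) \<in> S \<union> {0}" using fin by (intro Max_in) auto
  ultimately have MS: "Max (S \<union> {0}) \<in> S" using m2 by auto
  then obtain i0 j0 where ij: "Delta f = i0 + j0" "1 \<le> i0" "i0 \<le> CARD('p) - 1" "1 \<le> j0" "j0 \<le> CARD('p) - 1" "l i0 j0 \<noteq> 0"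
    unfolding S_def D by blast
  have bnd: "\<forall>i j. 1 \<le> i \<longrightarrow> 1 \<le> j \<longrightarrow> i < CARD('p) \<longrightarrow> j < CARD('p) \<longrightarrow> l i j \<noteq> 0 \<longrightarrow> i + j \<le> Delta f"
  proof (intro allI impI)
    fix i j assume h: "1 \<le> i" "1 \<le> j" "i < CARD('p)" "j < CARD('p)" "l i j \<noteq> 0"
    then have "i + j \<in> S" unfolding S_def by fastforce
    then show "i + j \<le> Delta f" unfolding D using fin by (intro Max_ge) auto
  qed
  show ?thesis using ij bnd N unfolding l_def
    by (intro exI[of _ i0] exI[of _ j0]) auto
qed

definition dxf :: "('p::prime_card mod_ring \<Rightarrow> 'p mod_ring \<Rightarrow> 'p mod_ring) \<Rightarrow> 'p mod_ring \<Rightarrow> 'p mod_ring \<Rightarrow> 'p mod_ring" where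
  "dxf F = (\<lambda>x y. F (x + 1) y - F x y)"
definition dyf :: "('p::prime_card mod_ring \<Rightarrow> 'p mod_ring \<Rightarrow> 'p mod_ring) \<Rightarrow> 'p mod_ring \<Rightarrow> 'p mod_ring \<Rightarrow> 'p mod_ring" where
  "dyf F = (\<lambda>x y. F x (y + 1) - F x y)"
definition trf :: "('p::prime_card mod_ring \<Rightarrow> 'p mod_ring \<Rightarrow> 'p mod_ring) \<Rightarrow> 'p mod_ring \<Rightarrow> 'p mod_ring \<Rightarrow> 'p mod_ring" where
  "trf F = (\<lambda>x y. F y x)"

lemma dyf_tr: "dyf F = trf (dxf (trf F))"
  by (simp add: dyf_def dxf_def trf_def)

lemma rep_tr:
  assumes "rep F \<mu>" shows "rep (trf F) (\<lambda>i j. \<mu> j i)"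
  unfolding rep_def trf_def
proof (intro allI)
  fix x y :: "'a mod_ring"
  have "F y x = (\<Sum>i<CARD('a). \<Sum>j<CARD('a). \<mu> i j * y ^ i * x ^ j)" using assms unfolding rep_def by blast
  also have "\<dots> = (\<Sum>j<CARD('a). \<Sum>i<CARD('a). \<mu> i j * y ^ i * x ^ j)" by (rule sum.swap)
  also have "\<dots> = (\<Sum>i<CARD('a). \<Sum>j<CARD('a). \<mu> j i * x ^ i * y ^ j)"
    by (intro sum.cong refl) (simp add: ac_simps)
  finally show "F y x = (\<Sum>i<CARD('a). \<Sum>j<CARD('a). \<mu> j i * x ^ i * y ^ j)" .
qed

lemma binom_diff:
  fixes x :: "'a::comm_ring_1"
  assumes "i \<le> N"
  shows "(x + 1) ^ i - x ^ i = (\<Sum>k<N. if k < i then of_nat (i choose k) * x ^ k else 0)"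
proof -
  have "(x + 1) ^ i = (\<Sum>k\<le>i. of_nat (i choose k) * x ^ k * 1 ^ (i - k))" by (rule binomial_ring)
  also have "\<dots> = (\<Sum>k<Suc i. of_nat (i choose k) * x ^ k)" by (simp add: lessThan_Suc_atMost)
  also have "\<dots> = (\<Sum>k<i. of_nat (i choose k) * x ^ k) + x ^ i" by simp
  finally have 1: "(x + 1) ^ i - x ^ i = (\<Sum>k<i. of_nat (i choose k) * x ^ k)" by simp
  have "{k \<in> {..<N}. k < i} = {..<i}" using assms by auto
  then have "(\<Sum>k<N. if k < i then of_nat (i choose k) * x ^ k else 0) = (\<Sum>k<i. of_nat (i choose k) * x ^ k)"
    using sum.inter_filter[of "{..<N}" "\<lambda>k. of_nat (i choose k) * x ^ k" "\<lambda>k. k < i", symmetric] by simp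
  then show ?thesis using 1 by simp
qed

lemma rep_dx:
  fixes F :: "'p::prime_card mod_ring \<Rightarrow> 'p mod_ring \<Rightarrow> 'p mod_ring"
  assumes r: "rep F \<mu>"
  shows "rep (dxf F) (\<lambda>k j. \<Sum>i<CARD('p). if k < i then of_nat (i choose k) * \<mu> i j else 0)"
  unfolding rep_def
proof (intro allI)
  fix x y :: "'p mod_ring"
  let ?N = "CARD('p)"
  have "dxf F x y = (\<Sum>i<?N. \<Sum>j<?N. \<mu> i j * (x + 1) ^ i * y ^ j) - (\<Sum>i<?N. \<Sum>j<?N. \<mu> i j * x ^ i * y ^ j)"
    using r unfolding rep_def dxf_def by simp
  also have "\<dots> = (\<Sum>i<?N. \<Sum>j<?N. \<mu> i j * ((x + 1) ^ i - x ^ i) * y ^ j)"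
    unfolding sum_subtractf[symmetric] by (intro sum.cong refl) (simp add: algebra_simps)
  also have "\<dots> = (\<Sum>i<?N. \<Sum>j<?N. \<Sum>k<?N. if k < i then of_nat (i choose k) * \<mu> i j * x ^ k * y ^ j else 0)"
  proof (intro sum.cong refl)
    fix i j assume i: "i \<in> {..<?N}"
    have "\<mu> i j * ((x + 1) ^ i - x ^ i) * y ^ j = \<mu> i j * (\<Sum>k<?N. if k < i then of_nat (i choose k) * x ^ k else 0) * y ^ j"
      using i by (simp add: binom_diff)
    also have "\<dots> = (\<Sum>k<?N. \<mu> i j * (if k < i then of_nat (i choose k) * x ^ k else 0) * y ^ j)"
      by (simp add: sum_distrib_left sum_distrib_right)
    also have "\<dots> = (\<Sum>k<?N. if k < i then of_nat (i choose k) * \<mu> i j * x ^ k * y ^ j else 0)"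
      by (intro sum.cong refl) (simp add: ac_simps)
    finally show "\<mu> i j * ((x + 1) ^ i - x ^ i) * y ^ j = \<dots>" .
  qed
  also have "\<dots> = (\<Sum>i<?N. \<Sum>k<?N. \<Sum>j<?N. if k < i then of_nat (i choose k) * \<mu> i j * x ^ k * y ^ j else 0)"
    by (rule sum.cong[OF refl]) (rule sum.swap)
  also have "\<dots> = (\<Sum>k<?N. \<Sum>i<?N. \<Sum>j<?N. if k < i then of_nat (i choose k) * \<mu> i j * x ^ k * y ^ j else 0)"
    by (rule sum.swap)
  also have "\<dots> = (\<Sum>k<?N. \<Sum>j<?N. \<Sum>i<?N. if k < i then of_nat (i choose k) * \<mu> i j * x ^ k * y ^ j else 0)"
    by (rule sum.cong[OF refl]) (rule sum.swap)
  also have "\<dots> = (\<Sum>k<?N. \<Sum>j<?N. (\<Sum>i<?N. if k < i then of_nat (i choose k) * \<mu> i j else 0) * x ^ k * y ^ j)"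
    unfolding sum_distrib_right by (intro sum.cong refl) simp
  finally show "dxf F x y = (\<Sum>k<?N. \<Sum>j<?N. (\<Sum>i<?N. if k < i then of_nat (i choose k) * \<mu> i j else 0) * x ^ k * y ^ j)" .
qed

definition invr :: "(nat \<Rightarrow> nat \<Rightarrow> 'p::prime_card mod_ring) \<Rightarrow> nat \<Rightarrow> nat \<Rightarrow> bool" where
  "invr \<mu> a b \<longleftrightarrow> \<mu> a b \<noteq> 0 \<and> (\<forall>i j. 1 \<le> i \<longrightarrow> 1 \<le> j \<longrightarrow> i < CARD('p) \<longrightarrow> j < CARD('p) \<longrightarrow> \<mu> i j \<noteq> 0 \<longrightarrow> i + j \<le> a + b)"

lemma of_nat_nz:
  assumes "0 < n" "n < CARD('p)" shows "(of_nat n :: 'p::prime_card mod_ring) \<noteq> 0"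
proof
  assume "(of_nat n :: 'p mod_ring) = 0"
  then have "CARD('p) dvd n" by (rule of_nat_0_mod_ring_dvd)
  then have "CARD('p) \<le> n" using assms dvd_imp_le by blast
  then show False using assms by simp
qed

lemma dx_step:
  fixes F :: "'p::prime_card mod_ring \<Rightarrow> 'p mod_ring \<Rightarrow> 'p mod_ring"
  assumes r: "rep F \<mu>" and iv: "invr \<mu> a b" and a: "2 \<le> a" "a < CARD('p)" and b: "1 \<le> b" "b < CARD('p)"
  shows "\<exists>\<mu>'. rep (dxf F) \<mu>' \<and> invr \<mu>' (a - 1) b"
proof -
  define \<mu>' where "\<mu>' = (\<lambda>k j. \<Sum>i<CARD('p). if k < i then of_nat (i choose k) * \<mu> i j else (0::'p mod_ring))"
  have r': "rep (dxf F) \<mu>'" unfolding \<mu>'_def by (rule rep_dx[OF r])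
  have bd: "\<And>i j. 1 \<le> i \<Longrightarrow> 1 \<le> j \<Longrightarrow> i < CARD('p) \<Longrightarrow> j < CARD('p) \<Longrightarrow> \<mu> i j \<noteq> 0 \<Longrightarrow> i + j \<le> a + b"
    using iv unfolding invr_def by blast
  have nz0: "\<mu> a b \<noteq> 0" using iv unfolding invr_def by blast
  have ab: "a choose (a - 1) = a" using a by (cases a) auto
  have "\<mu>' (a - 1) b = (\<Sum>i<CARD('p). if i = a then of_nat a * \<mu> a b else 0)"
    unfolding \<mu>'_def
  proof (rule sum.cong[OF refl])
    fix i assume i: "i \<in> {..<CARD('p)}"
    show "(if a - 1 < i then of_nat (i choose (a - 1)) * \<mu> i b else 0) = (if i = a then of_nat a * \<mu> a b else 0)"
    proof (cases "i = a")
      case True then show ?thesis using ab a by simp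
    next
      case False
      show ?thesis
      proof (cases "a - 1 < i")
        case True
        with False a have ai: "a < i" by simp
        have "\<mu> i b = 0"
        proof (rule ccontr)
          assume "\<mu> i b \<noteq> 0"
          then have "i + b \<le> a + b" using bd[of i b] i b ai a by simp
          then show False using ai by simp
        qed
        then show ?thesis using True False by simp
      next
        case False2: False
        then show ?thesis using False by simp
      qed
    qed
  qed
  also have "\<dots> = of_nat a * \<mu> a b" using a by simp
  finally have e1: "\<mu>' (a - 1) b = of_nat a * \<mu> a b" .
  have nz: "\<mu>' (a - 1) b \<noteq> 0" unfolding e1 using of_nat_nz[of a, where 'p='p] nz0 a by simp
  have bd': "i + j \<le> a - 1 + b" if h: "1 \<le> i" "1 \<le> j" "i < CARD('p)" "j < CARD('p)" "\<mu>' i j \<noteq> 0" for i j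
  proof -
    from h(5) obtain i' where i': "i' \<in> {..<CARD('p)}" "(if i < i' then of_nat (i' choose i) * \<mu> i' j else 0) \<noteq> 0"
      unfolding \<mu>'_def by (rule sum.not_neutral_contains_not_neutral)
    then have ii: "i < i'" "\<mu> i' j \<noteq> 0" by (auto split: if_splits)
    then have "i' + j \<le> a + b" using bd[of i' j] h i' by simp
    then show ?thesis using ii a by simp
  qed
  show ?thesis using r' nz bd' unfolding invr_def by blast
qed

lemma dy_step:
  fixes F :: "'p::prime_card mod_ring \<Rightarrow> 'p mod_ring \<Rightarrow> 'p mod_ring"
  assumes r: "rep F \<mu>" and iv: "invr \<mu> a b" and a: "1 \<le> a" "a < CARD('p)" and b: "2 \<le> b" "b < CARD('p)"
  shows "\<exists>\<mu>'. rep (dyf F) \<mu>' \<and> invr \<mu>' a (b - 1)"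
proof -
  have r1: "rep (trf F) (\<lambda>i j. \<mu> j i)" by (rule rep_tr[OF r])
  have iv1: "invr (\<lambda>i j. \<mu> j i) b a" unfolding invr_def
  proof (intro conjI allI impI)
    show "\<mu> a b \<noteq> 0" using iv unfolding invr_def by blast
    fix i j assume "1 \<le> i" "1 \<le> j" "i < CARD('p)" "j < CARD('p)" "\<mu> j i \<noteq> 0"
    then have "j + i \<le> a + b" using iv unfolding invr_def by blast
    then show "i + j \<le> b + a" by simp
  qed
  obtain \<nu> where n: "rep (dxf (trf F)) \<nu>" "invr \<nu> (b - 1) a" using dx_step[OF r1 iv1 b a] by blast
  have r2: "rep (trf (dxf (trf F))) (\<lambda>i j. \<nu> j i)" by (rule rep_tr[OF n(1)])
  have iv2: "invr (\<lambda>i j. \<nu> j i) a (b - 1)" unfolding invr_def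
  proof (intro conjI allI impI)
    show "\<nu> (b - 1) a \<noteq> 0" using n(2) unfolding invr_def by blast
    fix i j assume "1 \<le> i" "1 \<le> j" "i < CARD('p)" "j < CARD('p)" "\<nu> j i \<noteq> 0"
    then have "j + i \<le> (b - 1) + a" using n(2) unfolding invr_def by blast
    then show "i + j \<le> a + (b - 1)" by simp
  qed
  show ?thesis unfolding dyf_tr using r2 iv2 by blast
qed

lemma dx_iter:
  fixes F :: "'p::prime_card mod_ring \<Rightarrow> 'p mod_ring \<Rightarrow> 'p mod_ring"
  assumes r: "rep F \<mu>" and iv: "invr \<mu> a b" and a: "a < CARD('p)" and b: "1 \<le> b" "b < CARD('p)"
  shows "t < a \<Longrightarrow> \<exists>\<mu>'. rep ((dxf ^^ t) F) \<mu>' \<and> invr \<mu>' (a - t) b"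
proof (induction t)
  case 0
  then show ?case using r iv by auto
next
  case (Suc t)
  then obtain \<mu>' where m: "rep ((dxf ^^ t) F) \<mu>'" "invr \<mu>' (a - t) b" by auto
  have "\<exists>\<mu>''. rep (dxf ((dxf ^^ t) F)) \<mu>'' \<and> invr \<mu>'' (a - t - 1) b"
    by (rule dx_step[OF m]) (use Suc.prems a b in auto)
  then show ?case by simp
qed

lemma dy_iter:
  fixes F :: "'p::prime_card mod_ring \<Rightarrow> 'p mod_ring \<Rightarrow> 'p mod_ring"
  assumes r: "rep F \<mu>" and iv: "invr \<mu> a b" and a: "1 \<le> a" "a < CARD('p)" and b: "b < CARD('p)"
  shows "t < b \<Longrightarrow> \<exists>\<mu>'. rep ((dyf ^^ t) F) \<mu>' \<and> invr \<mu>' a (b - t)"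
proof (induction t)
  case 0
  then show ?case using r iv by auto
next
  case (Suc t)
  then obtain \<mu>' where m: "rep ((dyf ^^ t) F) \<mu>'" "invr \<mu>' a (b - t)" by auto
  have "\<exists>\<mu>''. rep (dyf ((dyf ^^ t) F)) \<mu>'' \<and> invr \<mu>'' a (b - t - 1)"
    by (rule dy_step[OF m]) (use Suc.prems a b in auto)
  then show ?case by simp
qed

definition comb :: "('p::prime_card mod_ring \<times> 'p mod_ring \<times> 'p mod_ring) list \<Rightarrow> ('p mod_ring \<Rightarrow> 'p mod_ring \<Rightarrow> 'p mod_ring) \<Rightarrow> 'p mod_ring \<Rightarrow> 'p mod_ring \<Rightarrow> 'p mod_ring" where
  "comb L F = (\<lambda>x y. sum_list (map (\<lambda>(c, u, v). c * F (x + u) (y + v)) L))"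

lemma comb_dx: "dxf (comb L F) = comb (map (\<lambda>(c, u, v). (c, u + 1, v)) L @ map (\<lambda>(c, u, v). (- c, u, v)) L) F"
proof (intro ext)
  fix x y
  show "dxf (comb L F) x y = comb (map (\<lambda>(c, u, v). (c, u + 1, v)) L @ map (\<lambda>(c, u, v). (- c, u, v)) L) F x y"
    unfolding dxf_def comb_def
    by (induction L) (auto simp: algebra_simps)
qed

lemma comb_dy: "dyf (comb L F) = comb (map (\<lambda>(c, u, v). (c, u, v + 1)) L @ map (\<lambda>(c, u, v). (- c, u, v)) L) F"
proof (intro ext)
  fix x y
  show "dyf (comb L F) x y = comb (map (\<lambda>(c, u, v). (c, u, v + 1)) L @ map (\<lambda>(c, u, v). (- c, u, v)) L) F x y"
    unfolding dyf_def comb_def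
    by (induction L) (auto simp: algebra_simps)
qed

lemma comb_dx_iter:
  assumes "\<forall>e\<in>set L. fst e \<noteq> 0"
  shows "\<exists>L'. (dxf ^^ s) (comb L F) = comb L' F \<and> length L' = 2 ^ s * length L \<and> (\<forall>e\<in>set L'. fst e \<noteq> 0)"
proof (induction s)
  case 0 then show ?case using assms by auto
next
  case (Suc s)
  then obtain L' where L': "(dxf ^^ s) (comb L F) = comb L' F" "length L' = 2 ^ s * length L" "\<forall>e\<in>set L'. fst e \<noteq> 0"
    by blast
  show ?case
    by (rule exI[of _ "map (\<lambda>(c, u, v). (c, u + 1, v)) L' @ map (\<lambda>(c, u, v). (- c, u, v)) L'"])
      (use L' in \<open>auto simp: comb_dx split: prod.splits\<close>)
qed

lemma comb_dy_iter:
  assumes "\<forall>e\<in>set L. fst e \<noteq> 0"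
  shows "\<exists>L'. (dyf ^^ s) (comb L F) = comb L' F \<and> length L' = 2 ^ s * length L \<and> (\<forall>e\<in>set L'. fst e \<noteq> 0)"
proof (induction s)
  case 0 then show ?case using assms by auto
next
  case (Suc s)
  then obtain L' where L': "(dyf ^^ s) (comb L F) = comb L' F" "length L' = 2 ^ s * length L" "\<forall>e\<in>set L'. fst e \<noteq> 0"
    by blast
  show ?case
    by (rule exI[of _ "map (\<lambda>(c, u, v). (c, u, v + 1)) L' @ map (\<lambda>(c, u, v). (- c, u, v)) L'"])
      (use L' in \<open>auto simp: comb_dy split: prod.splits\<close>)
qed

lemma comb_id: "comb [(1, 0, 0)] F = F"
  by (simp add: comb_def)

lemma sum_PiE_Suc:
  fixes G :: "(nat \<Rightarrow> 'a::finite) \<Rightarrow> real"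
  shows "(\<Sum>av\<in>PiE {..<Suc k} (\<lambda>_. UNIV). G av) = (\<Sum>v\<in>UNIV. \<Sum>av\<in>PiE {..<k} (\<lambda>_. UNIV). G (av(k := v)))"
proof -
  have e: "PiE {..<Suc k} (\<lambda>_. UNIV) = (\<lambda>(y, g). g(k := y)) ` (UNIV \<times> PiE {..<k} (\<lambda>_. (UNIV::'a set)))"
    using PiE_insert_eq[of k "{..<k}" "\<lambda>_. (UNIV::'a set)"] by (simp add: lessThan_Suc)
  have i: "inj_on (\<lambda>(y, g). g(k := y)) (UNIV \<times> PiE {..<k} (\<lambda>_. (UNIV::'a set)))"
    using inj_combinator[of k "{..<k}" "\<lambda>_. (UNIV::'a set)"] by simp
  have "(\<Sum>av\<in>PiE {..<Suc k} (\<lambda>_. UNIV). G av) = (\<Sum>z\<in>UNIV \<times> PiE {..<k} (\<lambda>_. (UNIV::'a set)). G ((\<lambda>(y, g). g(k := y)) z))"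
    unfolding e by (rule sum.reindex[OF i, unfolded comp_def])
  also have "\<dots> = (\<Sum>v\<in>UNIV. \<Sum>av\<in>PiE {..<k} (\<lambda>_. UNIV). G (av(k := v)))"
    by (simp add: sum.cartesian_product split_def)
  finally show ?thesis .
qed

definition SS :: "nat \<Rightarrow> (nat \<Rightarrow> 'p::prime_card mod_ring) \<Rightarrow> (nat \<Rightarrow> 'p mod_ring) \<Rightarrow> 'p mod_ring \<Rightarrow> 'p mod_ring \<Rightarrow> real" where
  "SS k c w A B = (\<Sum>av\<in>PiE {..<k} (\<lambda>_. UNIV). \<Sum>bv\<in>PiE {..<k} (\<lambda>_. UNIV).
      (\<Prod>i<k. if av i - bv i = w i then 1 / real CARD('p) else 0) *
      (if (\<Sum>i<k. c i * av i) = A \<and> (\<Sum>i<k. c i * bv i) = B then 1 else 0))"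

lemma SS_step:
  fixes c w :: "nat \<Rightarrow> 'p::prime_card mod_ring"
  shows "SS (Suc k) c w A B = (\<Sum>v\<in>UNIV. \<Sum>v'\<in>UNIV. (if v - v' = w k then 1 / real CARD('p::prime_card) else 0)
       * SS k c w (A - c k * v) (B - c k * v'))"
proof -
  let ?P = "\<lambda>av bv. (\<Prod>i<k. if av i - bv i = w i then 1 / real CARD('p) else 0)"
  let ?T = "\<lambda>v v'. (if v - v' = w k then 1 / real CARD('p) else 0)"
  let ?I = "\<lambda>av bv v v'. (if (\<Sum>i<k. c i * av i) = A - c k * v \<and> (\<Sum>i<k. c i * bv i) = B - c k * v' then 1 else (0::real))"
  have pt: "(\<Prod>i<Suc k. if (av(k := v)) i - (bv(k := v')) i = w i then 1 / real CARD('p) else 0) *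
      (if (\<Sum>i<Suc k. c i * (av(k := v)) i) = A \<and> (\<Sum>i<Suc k. c i * (bv(k := v')) i) = B then 1 else 0)
      = ?T v v' * (?P av bv * ?I av bv v v')" for av bv v v'
  proof -
    have p: "(\<Prod>i<Suc k. if (av(k := v)) i - (bv(k := v')) i = w i then 1 / real CARD('p) else 0) = ?P av bv * ?T v v'"
      by (simp add: prod.lessThan_Suc)
    have s1: "(\<Sum>i<Suc k. c i * (av(k := v)) i) = (\<Sum>i<k. c i * av i) + c k * v"
      by (simp add: sum.lessThan_Suc)
    have s2: "(\<Sum>i<Suc k. c i * (bv(k := v')) i) = (\<Sum>i<k. c i * bv i) + c k * v'"
      by (simp add: sum.lessThan_Suc)
    show ?thesis unfolding p s1 s2 by (simp add: eq_diff_eq)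
  qed
  have "SS (Suc k) c w A B = (\<Sum>v\<in>UNIV. \<Sum>av\<in>PiE {..<k} (\<lambda>_. UNIV). \<Sum>v'\<in>UNIV. \<Sum>bv\<in>PiE {..<k} (\<lambda>_. UNIV).
      ?T v v' * (?P av bv * ?I av bv v v'))"
    unfolding SS_def sum_PiE_Suc pt ..
  also have "\<dots> = (\<Sum>v\<in>UNIV. \<Sum>v'\<in>UNIV. \<Sum>av\<in>PiE {..<k} (\<lambda>_. UNIV). \<Sum>bv\<in>PiE {..<k} (\<lambda>_. UNIV).
      ?T v v' * (?P av bv * ?I av bv v v'))"
    by (rule sum.cong[OF refl]) (rule sum.swap)
  also have "\<dots> = (\<Sum>v\<in>UNIV. \<Sum>v'\<in>UNIV. ?T v v' * SS k c w (A - c k * v) (B - c k * v'))"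
    unfolding SS_def by (simp add: sum_distrib_left)
  finally show ?thesis .
qed

lemma sum_shift_delta:
  fixes G :: "'p::prime_card mod_ring \<Rightarrow> real"
  shows "(\<Sum>v'\<in>UNIV. (if v - v' = w then r else 0) * G v') = r * G (v - w)"
proof -
  have "(\<Sum>v'\<in>UNIV. (if v - v' = w then r else 0) * G v') = (\<Sum>v'\<in>UNIV. if v' = v - w then r * G v' else 0)"
    by (rule sum.cong[OF refl]) (auto simp: algebra_simps)
  also have "\<dots> = r * G (v - w)" by simp
  finally show ?thesis .
qed

lemma SS_val:
  fixes c w :: "nat \<Rightarrow> 'p::prime_card mod_ring"
  shows "(\<forall>i<k. c i \<noteq> 0) \<Longrightarrow> SS k c w A B = (if k = 0 then (if A = 0 \<and> B = 0 then 1 else 0)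
      else (if A - B = (\<Sum>i<k. c i * w i) then 1 / real CARD('p) else 0))"
proof (induction k arbitrary: A B)
  case 0
  then show ?case by (simp add: SS_def)
next
  case (Suc k)
  let ?p = "real CARD('p)"
  have ck: "c k \<noteq> 0" using Suc.prems by simp
  have IH: "\<And>A B. SS k c w A B = (if k = 0 then (if A = 0 \<and> B = 0 then 1 else 0)
      else (if A - B = (\<Sum>i<k. c i * w i) then 1 / ?p else 0))"
    using Suc by simp
  have "SS (Suc k) c w A B = (\<Sum>v\<in>UNIV. SS k c w (A - c k * v) (B - c k * (v - w k)) / ?p)"
    unfolding SS_step by (simp add: sum_shift_delta)
  also have "\<dots> = (if A - B = (\<Sum>i<Suc k. c i * w i) then 1 / ?p else 0)"
  proof (cases "k = 0")
    case True
    have "(\<Sum>v\<in>UNIV. SS k c w (A - c k * v) (B - c k * (v - w k)) / ?p)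
        = (\<Sum>v\<in>UNIV. if v = A / c k then (if A - B = c k * w k then 1 / ?p else 0) else 0)"
    proof (rule sum.cong[OF refl])
      fix v :: "'p mod_ring"
      have "(A - c k * v = 0 \<and> B - c k * (v - w k) = 0) \<longleftrightarrow> (v = A / c k \<and> A - B = c k * w k)"
        using ck by (auto simp: field_simps)
      then show "SS k c w (A - c k * v) (B - c k * (v - w k)) / ?p
          = (if v = A / c k then (if A - B = c k * w k then 1 / ?p else 0) else 0)"
        unfolding IH using True by auto
    qed
    also have "\<dots> = (if A - B = c k * w k then 1 / ?p else 0)" by simp
    finally show ?thesis using True by simp
  next
    case False
    have "(\<Sum>v\<in>UNIV. SS k c w (A - c k * v) (B - c k * (v - w k)) / ?p)
        = (\<Sum>v\<in>(UNIV::'p mod_ring set). (if A - B = (\<Sum>i<Suc k. c i * w i) then 1 / ?p else 0) / ?p)"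
    proof (rule sum.cong[OF refl])
      fix v :: "'p mod_ring"
      have "(A - c k * v - (B - c k * (v - w k)) = (\<Sum>i<k. c i * w i)) \<longleftrightarrow> (A - B = (\<Sum>i<Suc k. c i * w i))"
        by (auto simp: algebra_simps sum.lessThan_Suc)
      then show "SS k c w (A - c k * v) (B - c k * (v - w k)) / ?p
          = (if A - B = (\<Sum>i<Suc k. c i * w i) then 1 / ?p else 0) / ?p"
        unfolding IH using False by simp
    qed
    also have "\<dots> = (if A - B = (\<Sum>i<Suc k. c i * w i) then 1 / ?p else 0)"
      using card_ge2[where 'p='p] by simp
    finally show ?thesis .
  qed
  finally show ?case by simp
qed

theorem mainTheorem3:
  fixes f :: "'p::prime_card mod_ring \<Rightarrow> 'p mod_ring \<Rightarrow> 'p mod_ring"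
  assumes "\<not> additively_separable f"
  shows "Delta f \<ge> 2 \<and> simulates_with (2 ^ (Delta f - 2)) (functional_box f) PR_box"
proof -
  obtain i0 j0 where w: "Delta f = i0 + j0" "1 \<le> i0" "1 \<le> j0" "i0 < CARD('p)" "j0 < CARD('p)" "poly_coeffs f i0 j0 \<noteq> 0"
    and bnd: "\<forall>i j. 1 \<le> i \<longrightarrow> 1 \<le> j \<longrightarrow> i < CARD('p) \<longrightarrow> j < CARD('p) \<longrightarrow> poly_coeffs f i j \<noteq> 0 \<longrightarrow> i + j \<le> Delta f"
    using delta_witness[OF assms] by blast
  have D2: "Delta f \<ge> 2" using w by simp
  have r0: "rep f (poly_coeffs f)" using poly_coeffs_rep[of f] unfolding is_poly_rep_def rep_def by blast
  have iv0: "invr (poly_coeffs f) i0 j0" unfolding invr_def using w bnd by auto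
  obtain \<mu>1 where m1: "rep ((dyf ^^ (j0 - 1)) f) \<mu>1" "invr \<mu>1 i0 (j0 - (j0 - 1))"
    using dy_iter[OF r0 iv0 w(2) w(4) w(5), of "j0 - 1"] w by auto
  have m1': "invr \<mu>1 i0 1" using m1(2) w by simp
  obtain \<mu>2 where m2: "rep ((dxf ^^ (i0 - 1)) ((dyf ^^ (j0 - 1)) f)) \<mu>2" "invr \<mu>2 (i0 - (i0 - 1)) 1"
    using dx_iter[OF m1(1) m1' w(4), of "i0 - 1"] card_ge2[where 'p='p] w by auto
  have iv2: "invr \<mu>2 1 1" using m2(2) w by simp
  define G where "G = (dxf ^^ (i0 - 1)) ((dyf ^^ (j0 - 1)) f)"
  have z: "\<mu>2 i j = 0" if "1 \<le> i" "1 \<le> j" "i < CARD('p)" "j < CARD('p)" "(i, j) \<noteq> (1, 1)" for i j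
  proof (rule ccontr)
    assume "\<mu>2 i j \<noteq> 0"
    then have "i + j \<le> 1 + 1" using iv2 that unfolding invr_def by blast
    then show False using that by auto
  qed
  define m where "m = \<mu>2 1 1"
  have m0: "m \<noteq> 0" using iv2 unfolding invr_def m_def by simp
  define g where "g x = (\<Sum>i<CARD('p). \<mu>2 i 0 * x^i)" for x
  define h where "h y = (\<Sum>j<CARD('p). \<mu>2 0 j * y^j) - \<mu>2 0 0" for y
  have Geq: "G x y = m * x * y + g x + h y" for x y
    unfolding G_def m_def g_def h_def by (rule mixed11[OF m2(1) z])
  obtain L1 where L1: "(dyf ^^ (j0 - 1)) (comb [(1, 0, 0)] f) = comb L1 f" "length L1 = 2 ^ (j0 - 1) * 1"
      "\<forall>e\<in>set L1. fst e \<noteq> 0"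
    using comb_dy_iter[of "[(1, 0, 0)]" "j0 - 1" f] by auto
  obtain L where L: "(dxf ^^ (i0 - 1)) (comb L1 f) = comb L f" "length L = 2 ^ (i0 - 1) * length L1"
      "\<forall>e\<in>set L. fst e \<noteq> 0"
    using comb_dx_iter[OF L1(3), of "i0 - 1" f] by auto
  have GL: "G = comb L f" unfolding G_def using L(1) L1(1) comb_id[of f] by simp
  define k where "k = length L"
  have lenL: "k = 2 ^ (Delta f - 2)"
  proof -
    have "k = 2 ^ (i0 - 1) * 2 ^ (j0 - 1)" unfolding k_def using L(2) L1(2) by simp
    also have "\<dots> = 2 ^ (i0 - 1 + (j0 - 1))" by (simp add: power_add)
    also have "i0 - 1 + (j0 - 1) = Delta f - 2" using w by simp
    finally show ?thesis .
  qed
  have k0: "k \<noteq> 0" using lenL by simp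
  define c where "c i = fst (L ! i) / m" for i
  define u where "u i = fst (snd (L ! i))" for i
  define v where "v i = snd (snd (L ! i))" for i
  have comb_eq: "comb L f x y = (\<Sum>i<k. fst (L ! i) * f (x + u i) (y + v i))" for x y
    unfolding comb_def k_def u_def v_def
    by (simp add: sum_list_sum_nth atLeast0LessThan split_def)
  have key: "(\<Sum>i<k. c i * f (x + u i) (y + v i)) = x * y + g x / m + h y / m" for x y
  proof -
    have "(\<Sum>i<k. c i * f (x + u i) (y + v i)) = (\<Sum>i<k. fst (L ! i) * f (x + u i) (y + v i)) / m"
      unfolding c_def by (simp add: sum_divide_distrib)
    also have "\<dots> = G x y / m" unfolding GL comb_eq ..
    also have "\<dots> = x * y + g x / m + h y / m"
    proof -
      have "m * x * y / m = x * y" using m0 by (simp add: mult.assoc)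
      then show ?thesis unfolding Geq by (simp only: add_divide_distrib)
    qed
    finally show ?thesis .
  qed
  have cnz: "\<forall>i<k. c i \<noteq> 0"
    using L(3) m0 unfolding c_def k_def by (auto simp: nth_mem)
  have ind: "\<And>(X::'p mod_ring) (Y::'p mod_ring) a b (G' :: 'p mod_ring) (H'::'p mod_ring). (X - G' = a \<and> Y + H' = b) \<longleftrightarrow> (X = a + G' \<and> Y = b - H')"
    by (auto simp: algebra_simps)
  have "simulates_with k (functional_box f) PR_box"
    unfolding simulates_with_def
  proof (intro exI allI)
    fix a b x y :: "'p mod_ring"
    let ?w = "\<lambda>i. f (x + u i) (y + v i)"
    have "(\<Sum>av\<in>PiE {..<k} (\<lambda>_. UNIV). \<Sum>bv\<in>PiE {..<k} (\<lambda>_. UNIV).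
           (\<Prod>i<k. functional_box f (av i) (bv i) (x + u i) (y + v i)) *
           (if (\<Sum>i<k. c i * av i) - g x / m = a \<and> (\<Sum>i<k. c i * bv i) + h y / m = b then 1 else 0))
        = SS k c ?w (a + g x / m) (b - h y / m)"
      unfolding SS_def functional_box_def ind ..
    also have "\<dots> = (if (a + g x / m) - (b - h y / m) = (\<Sum>i<k. c i * ?w i) then 1 / real CARD('p) else 0)"
      using SS_val[OF cnz] k0 by simp
    also have "\<dots> = PR_box a b x y"
    proof -
      have "((a + g x / m) - (b - h y / m) = (\<Sum>i<k. c i * ?w i)) \<longleftrightarrow> a - b = x * y"
        unfolding key by (auto simp: algebra_simps)
      then show ?thesis unfolding PR_box_def by simp
    qed
    finally show "PR_box a b x y = (\<Sum>av\<in>PiE {..<k} (\<lambda>_. UNIV). \<Sum>bv\<in>PiE {..<k} (\<lambda>_. UNIV).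
           (\<Prod>i<k. functional_box f (av i) (bv i) ((\<lambda>x i. x + u i) x i) ((\<lambda>y i. y + v i) y i)) *
           (if (\<lambda>x av. (\<Sum>i<k. c i * av i) - g x / m) x av = a \<and> (\<lambda>y bv. (\<Sum>i<k. c i * bv i) + h y / m) y bv = b then 1 else 0))"
      by simp
  qed
  then show ?thesis using D2 lenL by simp
qed

end
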